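(* A ring $R$ is CSNC if and only if (1) every clean element of $R$ is strongly clean, and (2) $R$ is a UU-ring.
   Context: All rings are associative with identity $1$. For a ring $R$, $\mathrm{Id}(R)$, $U(R)$, $\mathrm{Nil}(R)$ denote the sets of idempotents, units and nilpotent elements. An element $a\in R$ is clean if $a=e+u$ for some $e\in\mathrm{Id}(R)$, $u\in U(R)$, and strongly clean if such $e,u$ can be chosen with $eu=ue$ (equivalently $ea=ae$). An element $a$ is strongly nil-clean if $a=e+q$ with $e\in \mathrm{Id}(R)$, $q\in\mathrm{Nil}(R)$ and $eq=qe$. A ring $R$ is called CSNC if every clean element of $R$ is strongly nil-clean. $R$ is a UU-ring if $U(R)=1+\mathrm{Nil}(R)$. *)

theory Defs
  imports Main
begin

definition idempotent_el :: "'a::ring_1 \<Rightarrow> bool" where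
  "idempotent_el e \<longleftrightarrow> e * e = e"

definition unit_el :: "'a::ring_1 \<Rightarrow> bool" where
  "unit_el u \<longleftrightarrow> (\<exists>v. u * v = 1 \<and> v * u = 1)"

definition nilpotent_el :: "'a::ring_1 \<Rightarrow> bool" where
  "nilpotent_el q \<longleftrightarrow> (\<exists>n::nat. q ^ n = 0)"

definition clean_el :: "'a::ring_1 \<Rightarrow> bool" where
  "clean_el a \<longleftrightarrow> (\<exists>e u. idempotent_el e \<and> unit_el u \<and> a = e + u)"

definition strongly_clean_el :: "'a::ring_1 \<Rightarrow> bool" where
  "strongly_clean_el a \<longleftrightarrow>
     (\<exists>e u. idempotent_el e \<and> unit_el u \<and> a = e + u \<and> e * u = u * e)"

definition strongly_nil_clean_el :: "'a::ring_1 \<Rightarrow> bool" where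
  "strongly_nil_clean_el a \<longleftrightarrow>
     (\<exists>e q. idempotent_el e \<and> nilpotent_el q \<and> a = e + q \<and> e * q = q * e)"

definition CSNC :: "'a::ring_1 itself \<Rightarrow> bool" where
  "CSNC _ \<longleftrightarrow> (\<forall>a::'a. clean_el a \<longrightarrow> strongly_nil_clean_el a)"

definition UU_ring :: "'a::ring_1 itself \<Rightarrow> bool" where
  "UU_ring _ \<longleftrightarrow> {u::'a. unit_el u} = {1 + q | q::'a. nilpotent_el q}"

end

theory Submission
  imports Defs
begin

lemma geo_l: "(1 - x) * (\<Sum>i<n. x ^ i) = 1 - (x::'a::ring_1) ^ n"
proof (induction n)
  case 0 then show ?case by simp
next
  case (Suc n)
  have "(1 - x) * (\<Sum>i<Suc n. x ^ i) = (1 - x) * (\<Sum>i<n. x ^ i) + (1 - x) * x ^ n"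
    by (simp add: distrib_left)
  also have "\<dots> = 1 - x ^ n + (x ^ n - x ^ Suc n)" using Suc by (simp add: left_diff_distrib power_Suc)
  finally show ?case by simp
qed

lemma geo_r: "(\<Sum>i<n. x ^ i) * (1 - x) = 1 - (x::'a::ring_1) ^ n"
proof (induction n)
  case 0 then show ?case by simp
next
  case (Suc n)
  have "(\<Sum>i<Suc n. x ^ i) * (1 - x) = (\<Sum>i<n. x ^ i) * (1 - x) + x ^ n * (1 - x)"
    by (simp add: distrib_right)
  also have "\<dots> = 1 - x ^ n + (x ^ n - x ^ Suc n)" using Suc by (simp add: right_diff_distrib power_Suc2 power_commutes)
  finally show ?case by simp
qed

lemma num_comm: "x * (numeral w * y) = numeral w * (x * (y::'a::ring_1))"
  by (metis mult.assoc mult_of_nat_commute of_nat_numeral)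

lemma nil_pow_ge: "(q::'a::ring_1) ^ n = 0 \<Longrightarrow> n \<le> m \<Longrightarrow> q ^ m = 0"
  by (metis le_add_diff_inverse mult_zero_left power_add)

lemma nil_neg: "nilpotent_el (q::'a::ring_1) \<Longrightarrow> nilpotent_el (- q)"
  unfolding nilpotent_el_def by (metis mult_zero_right power_minus)

lemma one_plus_nil_unit: "nilpotent_el (y::'a::ring_1) \<Longrightarrow> unit_el (1 + y)"
proof -
  assume "nilpotent_el y"
  then obtain n where n: "(- y) ^ n = 0" using nil_neg unfolding nilpotent_el_def by blast
  have "(1 + y) * (\<Sum>i<n. (-y) ^ i) = 1" using geo_l[of "-y" n] n by simp
  moreover have "(\<Sum>i<n. (-y) ^ i) * (1 + y) = 1" using geo_r[of "-y" n] n by simp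
  ultimately show ?thesis unfolding unit_el_def by blast
qed

lemma pow_mult_comm: "(a::'a::ring_1) * b = b * a \<Longrightarrow> (a * b) ^ n = a ^ n * b ^ n"
proof (induction n)
  case 0 then show ?case by simp
next
  case (Suc n)
  have c: "b * a ^ n = a ^ n * b" using power_commuting_commutes[OF Suc.prems] by simp
  have "(a * b) ^ Suc n = (a * b) * (a ^ n * b ^ n)" using Suc by simp
  also have "\<dots> = a * (b * a ^ n) * b ^ n" by (simp add: mult.assoc)
  also have "\<dots> = a ^ Suc n * b ^ Suc n" by (simp add: c mult.assoc)
  finally show ?case .
qed

lemma unit_plus_nil:
  assumes u: "unit_el (u::'a::ring_1)" and x: "nilpotent_el x" and c: "u * x = x * u"
  shows "unit_el (u + x)"
proof -
  obtain v where v: "u * v = 1" "v * u = 1" using u unfolding unit_el_def by blast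
  have vx: "v * x = x * v"
  proof -
    have "v * x = v * x * (u * v)" using v by simp
    also have "\<dots> = v * (x * u) * v" by (simp add: mult.assoc)
    also have "\<dots> = v * (u * x) * v" using c by simp
    also have "\<dots> = (v * u) * x * v" by (simp add: mult.assoc)
    finally show ?thesis using v by simp
  qed
  obtain n where n: "x ^ n = 0" using x unfolding nilpotent_el_def by blast
  have "(v * x) ^ n = 0" using pow_mult_comm[OF vx] n by simp
  then have "unit_el (1 + v * x)" using one_plus_nil_unit unfolding nilpotent_el_def by blast
  then obtain w where w: "(1 + v * x) * w = 1" "w * (1 + v * x) = 1" unfolding unit_el_def by blast
  have eq: "u + x = u * (1 + v * x)" using v by (simp add: algebra_simps mult.assoc[symmetric])
  have "(u + x) * (w * v) = 1" unfolding eq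
    by (metis mult.assoc mult_1_right w(1) v(1))
  moreover have "(w * v) * (u + x) = 1" unfolding eq
    by (metis mult.assoc mult_1_left w(2) v(2))
  ultimately show ?thesis unfolding unit_el_def by blast
qed

lemma idem_unit: "idempotent_el (e::'a::ring_1) \<Longrightarrow> unit_el e \<Longrightarrow> e = 1"
  unfolding idempotent_el_def unit_el_def by (metis mult.assoc mult_1_right)

theorem theorem2p4:
  shows "CSNC TYPE('a::ring_1) \<longleftrightarrow>
           ((\<forall>a::'a. clean_el a \<longrightarrow> strongly_clean_el a) \<and> UU_ring TYPE('a))"
proof
  assume H: "CSNC TYPE('a)"
  have snc: "strongly_nil_clean_el a" if "clean_el a" for a :: 'a
    using H that unfolding CSNC_def by blast
  show "(\<forall>a::'a. clean_el a \<longrightarrow> strongly_clean_el a) \<and> UU_ring TYPE('a)"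
  proof
    show "\<forall>a::'a. clean_el a \<longrightarrow> strongly_clean_el a"
    proof (intro allI impI)
      fix a :: 'a assume "clean_el a"
      then obtain e q where eq: "idempotent_el e" "nilpotent_el q" "a = e + q" "e * q = q * e"
        using snc unfolding strongly_nil_clean_el_def by blast
      have ee: "e * e = e" using eq(1) unfolding idempotent_el_def .
      have e2: "e * (2 * e) = 2 * e"
        by (metis ee mult.assoc mult_of_nat_commute of_nat_numeral)
      have "(2 * e - 1) * (2 * e - 1) = 2 * (e * (2 * e)) - 2 * e - 2 * e + 1"
        by (simp add: algebra_simps)
      also have "\<dots> = 1"
      proof -
        have d: "2 * (2 * e) = 2 * e + 2 * (e::'a)"
          by (metis one_add_one distrib_right mult_1_left)
        show ?thesis unfolding e2 d by simp
      qed
      finally have "unit_el (2 * e - 1)" unfolding unit_el_def by blast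
      moreover have "(2 * e - 1) * q = q * (2 * e - 1)"
        using eq(4) by (simp add: algebra_simps num_comm)
      ultimately have u: "unit_el (2 * e - 1 + q)" using unit_plus_nil eq(2) by blast
      have i: "idempotent_el (1 - e)" using ee unfolding idempotent_el_def by (simp add: algebra_simps)
      have "a = (1 - e) + (2 * e - 1 + q)" unfolding eq(3) mult_2 by simp
      moreover have "(1 - e) * (2 * e - 1 + q) = (2 * e - 1 + q) * (1 - e)"
      proof -
        have q2: "q * (2*e) = 2*(q*e)" by (rule num_comm)
        have "(1 - e) * (2 * e - 1 + q) = 2*e - 1 + q - e*(2*e) + e - e*q" by (simp add: algebra_simps)
        also have "\<dots> = e - 1 + q - e * q" unfolding e2 by simp
        also have "\<dots> = (2 * e - 1 + q) * (1 - e)"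
          by (simp add: algebra_simps ee eq(4) q2 mult.assoc[symmetric] mult_2)
        finally show ?thesis .
      qed
      ultimately show "strongly_clean_el a" unfolding strongly_clean_el_def using u i by blast
    qed
  next
    show "UU_ring TYPE('a)" unfolding UU_ring_def
    proof (intro equalityI subsetI)
      fix u :: 'a assume "u \<in> {u. unit_el u}"
      then have u: "unit_el u" by simp
      have "idempotent_el (0::'a)" unfolding idempotent_el_def by simp
      then have "clean_el u" unfolding clean_el_def using u by force
      then obtain e q where eq: "idempotent_el e" "nilpotent_el q" "u = e + q" "e * q = q * e"
        using snc unfolding strongly_nil_clean_el_def by blast
      have "u * (- q) = (- q) * u" using eq(3,4) by (simp add: algebra_simps)
      then have "unit_el (u + - q)" using unit_plus_nil u nil_neg eq(2) by blast
      then have "unit_el e" using eq(3) by simp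
      then have "e = 1" using idem_unit eq(1) by blast
      then show "u \<in> {1 + q |q. nilpotent_el q}" using eq by blast
    next
      fix u :: 'a assume "u \<in> {1 + q |q. nilpotent_el q}"
      then show "u \<in> {u. unit_el u}" using one_plus_nil_unit by blast
    qed
  qed
next
  assume H: "(\<forall>a::'a. clean_el a \<longrightarrow> strongly_clean_el a) \<and> UU_ring TYPE('a)"
  have UU: "unit_el u \<longleftrightarrow> (\<exists>q. u = 1 + q \<and> nilpotent_el q)" for u :: 'a
    using H unfolding UU_ring_def by (auto simp: set_eq_iff)
  have "unit_el (- 1 :: 'a)" unfolding unit_el_def by (rule exI[of _ "-1"]) simp
  then obtain q0 :: 'a where "- 1 = 1 + q0" "nilpotent_el q0" using UU by blast
  then have "q0 = (-2::'a)"
    by (metis add_diff_cancel_left' one_add_one minus_diff_eq diff_minus_eq_add add_uminus_conv_diff minus_add_distrib)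
  then have "nilpotent_el (- 2 :: 'a)" using \<open>nilpotent_el q0\<close> by simp
  then have n2: "nilpotent_el (2 :: 'a)" using nil_neg by fastforce
  show "CSNC TYPE('a)" unfolding CSNC_def
  proof (intro allI impI)
    fix a :: 'a assume "clean_el a"
    then obtain e u where eu: "idempotent_el e" "unit_el u" "a = e + u" "e * u = u * e"
      using H unfolding strongly_clean_el_def by blast
    have ee: "e * e = e" using eu(1) unfolding idempotent_el_def .
    have c2: "2 * e = e * (2::'a)" using mult_of_nat_commute[of 2 e] by simp
    obtain n where "(2::'a) ^ n = 0" using n2 unfolding nilpotent_el_def by blast
    then have "(2 * e) ^ n = 0" using pow_mult_comm[OF c2] by simp
    then have n2e: "nilpotent_el (2 * e)" unfolding nilpotent_el_def by blast
    have "u * (2 * e) = (2 * e) * u"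
      by (simp add: num_comm eu(4) mult.assoc)
    then have "unit_el (u + 2 * e)" using unit_plus_nil eu(2) n2e by blast
    then obtain q where q: "u + 2 * e = 1 + q" "nilpotent_el q" using UU by blast
    have i: "idempotent_el (1 - e)" using ee unfolding idempotent_el_def by (simp add: algebra_simps)
    have a: "a = (1 - e) + q" 
    proof -
      have "u = 1 + q - 2 * e" using q(1) by (simp add: eq_diff_eq)
      then show ?thesis unfolding eu(3) mult_2 by simp
    qed
    have qd: "q = u + 2 * e - 1" using q(1) by (simp add: algebra_simps)
    have "(1 - e) * q = q * (1 - e)" unfolding qd
    proof -
      have "(1 - e) * (u + 2 * e - 1) = u + 2*e - 1 - e*u - e*(2*e) + e" by (simp add: algebra_simps)
      also have "\<dots> = u + 2*e - 1 - e*u - 2*e + e" by (simp add: num_comm ee)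
      also have "\<dots> = (u + 2 * e - 1) * (1 - e)"
        by (simp add: algebra_simps eu(4) num_comm mult.assoc[symmetric] ee mult_2)
      finally show "(1 - e) * (u + 2 * e - 1) = (u + 2 * e - 1) * (1 - e)" .
    qed
    then show "strongly_nil_clean_el a" unfolding strongly_nil_clean_el_def using i q(2) a by blast
  qed
qed

end
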